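(* Let $X$ be a compact metric space and $f\colon X\to X$ a continuous, topologically transitive map. Suppose there are $\delta>0$ and $\lambda>0$ such that: (i) (uniformly expanding) $d(fx,fy)\ge e^{\lambda}d(x,y)$ whenever $d(x,y)<\delta$; (ii) (locally onto) for every $x\in X$, $f(B(x,\delta))\supset B(fx,\delta)$. Then $(X,f)$ has the specification property at scale $\delta/(1-e^{-\lambda})$: there is $\tau\in\mathbb{N}$ such that for every finite collection $(x_1,n_1),\dots,(x_k,n_k)\in X\times\mathbb{N}$ there exist integers $0=T_1<T_2<\dots<T_k$ and $y\in X$ with $f^{T_i}(y)\in B_{n_i}(x_i,\delta/(1-e^{-\lambda}))$ for all $1\le i\le k$ and $T_i-(T_{i-1}+n_{i-1})\in[0,\tau]$ for all $2\le i\le k$.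
   Context: $B(x,r)$ is the open metric ball. $d_n(x,y)=\max\{d(f^kx,f^ky):0\le k<n\}$ and $B_n(x,\epsilon)=\{y: d_n(x,y)<\epsilon\}$ is the Bowen ball. *)

theory Defs
  imports "HOL-Analysis.Analysis"
begin

definition bowen_ball :: "('a::metric_space \<Rightarrow> 'a) \<Rightarrow> nat \<Rightarrow> 'a \<Rightarrow> real \<Rightarrow> 'a set" where
  "bowen_ball f n x eps = {y. \<forall>k<n. dist ((f ^^ k) x) ((f ^^ k) y) < eps}"

definition top_transitive :: "('a::topological_space \<Rightarrow> 'a) \<Rightarrow> bool" where
  "top_transitive f \<longleftrightarrow>
     (\<forall>U V. open U \<longrightarrow> open V \<longrightarrow> U \<noteq> {} \<longrightarrow> V \<noteq> {} \<longrightarrow>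
        (\<exists>n::nat. n > 0 \<and> (f ^^ n) ` U \<inter> V \<noteq> {}))"

text \<open>Specification property at scale eps; the orbit segments are indexed by i < k.\<close>
definition specification_at_scale :: "('a::metric_space \<Rightarrow> 'a) \<Rightarrow> real \<Rightarrow> bool" where
  "specification_at_scale f eps \<longleftrightarrow>
     (\<exists>\<tau>::nat. \<forall>(k::nat) (xs::nat \<Rightarrow> 'a) (ns::nat \<Rightarrow> nat).
        (\<exists>(T::nat \<Rightarrow> nat) y. T 0 = 0 \<and>
           (\<forall>i. 0 < i \<and> i < k \<longrightarrow> T (i - 1) < T i) \<and>
           (\<forall>i<k. (f ^^ T i) y \<in> bowen_ball f (ns i) (xs i) eps) \<and>
           (\<forall>i. 0 < i \<and> i < k \<longrightarrow>
               T (i - 1) + ns (i - 1) \<le> T i \<and> T i - (T (i - 1) + ns (i - 1)) \<le> \<tau>)))"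

end

theory Submission
  imports Defs
begin

lemma pull_back:
  fixes f :: "'a::metric_space \<Rightarrow> 'a"
  assumes lam: "lam > 0"
    and exp_ass: "\<And>x y. dist x y < delta \<Longrightarrow> dist (f x) (f y) \<ge> exp lam * dist x y"
    and onto: "\<And>x. ball (f x) delta \<subseteq> f ` ball x delta"
  shows "dist ((f^^n) x) z < delta \<Longrightarrow>
    \<exists>y. (f^^n) y = z \<and> (\<forall>k\<le>n. dist ((f^^k) x) ((f^^k) y) \<le> dist ((f^^n) x) z)"
proof (induction n arbitrary: x)
  case 0
  then show ?case by auto
next
  case (Suc n)
  have e: "(f ^^ Suc n) x = (f^^n) (f x)" by (metis comp_apply funpow_Suc_right)
  obtain y' where y': "(f^^n) y' = z" "\<forall>k\<le>n. dist ((f^^k) (f x)) ((f^^k) y') \<le> dist ((f^^n) (f x)) z"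
    using Suc.IH[of "f x"] Suc.prems e by auto
  have d0: "dist (f x) y' \<le> dist ((f^^n) (f x)) z" using y'(2)[rule_format, of 0] by simp
  hence "y' \<in> ball (f x) delta" using Suc.prems e by simp
  then obtain y where y: "y \<in> ball x delta" "f y = y'" using onto[of x] by blast
  have "exp lam * dist x y \<le> dist (f x) y'" using exp_ass[of x y] y by simp
  moreover have "exp lam \<ge> 1" using lam by simp
  moreover have "dist x y \<ge> 0" by simp
  ultimately have dxy: "dist x y \<le> dist (f x) y'"
    by (metis dual_order.trans mult_le_cancel_right1 not_less zero_less_dist_iff)
  show ?case
  proof (intro exI conjI allI impI)
    show "(f ^^ Suc n) y = z" using y y' by (metis comp_apply funpow_Suc_right)
    fix k assume k: "k \<le> Suc n"
    show "dist ((f ^^ k) x) ((f ^^ k) y) \<le> dist ((f ^^ Suc n) x) z"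
    proof (cases k)
      case 0
      then show ?thesis using dxy d0 e by simp
    next
      case (Suc k')
      then have "(f ^^ k) x = (f^^k') (f x)" "(f ^^ k) y = (f^^k') y'"
        using y by (simp_all add: funpow_swap1)
      then show ?thesis using y'(2) k Suc e by auto
    qed
  qed
qed

lemma tau_exists:
  fixes f :: "'a::metric_space \<Rightarrow> 'a"
  assumes comp: "compact (UNIV :: 'a set)" and tt: "top_transitive f" and r: "r > 0"
  shows "\<exists>\<tau>. \<forall>p q. \<exists>j. 1 \<le> j \<and> j \<le> \<tau> \<and> (\<exists>w. dist p w < r \<and> dist ((f^^j) w) q < r)"
proof -
  define Ov where "Ov n = {(p,q). \<exists>j. 1 \<le> j \<and> j \<le> n \<and> (\<exists>w. dist p w < r \<and> dist ((f^^j) w) q < r)}" for n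
  have Oeq: "Ov n = (\<Union>j\<in>{1..n}. \<Union>w. ball w r \<times> ball ((f^^j) w) r)" for n
    unfolding Ov_def by (auto simp: dist_commute) (metis atLeastAtMost_iff One_nat_def, metis One_nat_def)
  have opn: "open B" if "B \<in> range Ov" for B
    using that unfolding Oeq by (auto intro!: open_Times)
  have cov: "(UNIV :: ('a\<times>'a) set) \<subseteq> \<Union>(range Ov)"
  proof
    fix pq :: "'a \<times> 'a"
    obtain p q where pq: "pq = (p,q)" by fastforce
    obtain n where n: "n > 0" "(f^^n) ` ball p r \<inter> ball q r \<noteq> {}"
      using tt r unfolding top_transitive_def
      by (metis centre_in_ball empty_iff open_ball)
    then obtain w where "dist p w < r" "dist q ((f^^n) w) < r" by auto
    hence "pq \<in> Ov n" unfolding pq Ov_def using n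
      by (auto simp: dist_commute intro!: exI[of _ n])
    thus "pq \<in> \<Union>(range Ov)" by blast
  qed
  have "compact ((UNIV :: 'a set) \<times> (UNIV :: 'a set))" using comp by (intro compact_Times)
  then obtain T' where T': "T' \<subseteq> range Ov" "finite T'" "UNIV \<subseteq> \<Union>T'"
    using compactE[OF _ cov opn] by auto
  then obtain N where N: "finite N" "T' = Ov ` N" by (meson finite_subset_image)
  have mono: "Ov m \<subseteq> Ov n" if "m \<le> n" for m n
    unfolding Ov_def using that by fastforce
  have all: "(p,q) \<in> Ov (Max (insert 0 N))" for p q
  proof -
    obtain m where "m \<in> N" "(p,q) \<in> Ov m" using T' N by blast
    moreover have "m \<le> Max (insert 0 N)" using N(1) \<open>m \<in> N\<close> by simp
    ultimately show ?thesis using mono by blast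
  qed
  show ?thesis
    by (rule exI[of _ "Max (insert 0 N)"]) (use all in \<open>auto simp: Ov_def\<close>)
qed

theorem proposition5p13:
  fixes f :: "'a::metric_space \<Rightarrow> 'a" and delta lam :: real
  assumes "compact (UNIV :: 'a set)"
    and "continuous_on UNIV f"
    and "top_transitive f"
    and "delta > 0" and "lam > 0"
    and "\<And>x y. dist x y < delta \<Longrightarrow> dist (f x) (f y) \<ge> exp lam * dist x y"
    and "\<And>x. ball (f x) delta \<subseteq> f ` ball x delta"
  shows "specification_at_scale f (delta / (1 - exp (- lam)))"
proof -
  note pb = pull_back[of lam delta f, OF assms(5) assms(6) assms(7)]
  have "delta / 2 > 0" using assms(4) by simp
  obtain \<tau> where tau: "\<And>p q. \<exists>j. 1 \<le> j \<and> j \<le> \<tau> \<and> (\<exists>w. dist p w < delta/2 \<and> dist ((f^^j) w) q < delta/2)"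
    using tau_exists[OF assms(1) assms(3) \<open>delta/2 > 0\<close>] by blast
  define eps where "eps = delta / (1 - exp (- lam))"
  have "exp (- lam) < 1" "exp (-lam) > 0" using assms(5) by auto
  hence "delta \<le> eps" unfolding eps_def using assms(4)
    by (simp add: le_divide_eq)
  hence bmono: "bowen_ball f n x delta \<subseteq> bowen_ball f n x eps" for n x
    unfolding bowen_ball_def by fastforce
  show ?thesis
    unfolding specification_at_scale_def eps_def[symmetric]
  proof (intro exI[of _ \<tau>] allI)
    fix k :: nat and xs :: "nat \<Rightarrow> 'a" and ns :: "nat \<Rightarrow> nat"
    show "\<exists>T y. T 0 = 0 \<and>
           (\<forall>i. 0 < i \<and> i < k \<longrightarrow> T (i - 1) < T i) \<and>
           (\<forall>i<k. (f ^^ T i) y \<in> bowen_ball f (ns i) (xs i) eps) \<and>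
           (\<forall>i. 0 < i \<and> i < k \<longrightarrow>
               T (i - 1) + ns (i - 1) \<le> T i \<and> T i - (T (i - 1) + ns (i - 1)) \<le> \<tau>)"
    proof (cases "k = 0")
      case True
      then show ?thesis by (intro exI[of _ "\<lambda>_. 0"]) auto
    next
      case False
      have key: "\<exists>T y. T i = 0 \<and>
          (\<forall>l. i < l \<and> l < k \<longrightarrow> T (l-1) + ns (l-1) < T l \<and> T l - (T (l-1) + ns (l-1)) \<le> \<tau>) \<and>
          (\<forall>l. i \<le> l \<and> l < k \<longrightarrow> (f^^T l) y \<in> bowen_ball f (ns l) (xs l) delta)"
        if "i \<le> k - 1" for i
        using that
      proof (induction i rule: inc_induct)
        case base
        show ?case
        proof (intro exI[of _ "\<lambda>_. 0"] exI[of _ "xs (k-1)"] conjI allI impI)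
          fix l assume "k - 1 \<le> l \<and> l < k"
          hence "l = k - 1" by arith
          thus "(f ^^ 0) (xs (k - 1)) \<in> bowen_ball f (ns l) (xs l) delta"
            using assms(4) by (simp add: bowen_ball_def)
        qed auto
      next
        case (step n)
        obtain T' y' where IH: "T' (Suc n) = 0"
          "\<forall>l. Suc n < l \<and> l < k \<longrightarrow> T' (l-1) + ns (l-1) < T' l \<and> T' l - (T' (l-1) + ns (l-1)) \<le> \<tau>"
          "\<forall>l. Suc n \<le> l \<and> l < k \<longrightarrow> (f^^T' l) y' \<in> bowen_ball f (ns l) (xs l) delta"
          using step.IH by blast
        define p where "p = (f^^ns n) (xs n)"
        obtain j w where jw: "1 \<le> j" "j \<le> \<tau>" "dist p w < delta/2" "dist ((f^^j) w) y' < delta/2"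
          using tau[of p y'] by blast
        obtain w' where w': "(f^^j) w' = y'" "\<forall>m\<le>j. dist ((f^^m) w) ((f^^m) w') \<le> dist ((f^^j) w) y'"
          using pb[of j w y'] jw assms(4) by auto
        have "dist w w'\<le> dist ((f^^j) w) y'" using w'(2)[rule_format, of 0] by simp
        hence "dist p w' < delta" using jw dist_triangle[of p w' w] by linarith
        then obtain y where y: "(f^^ns n) y = w'"
          "\<forall>m\<le>ns n. dist ((f^^m) (xs n)) ((f^^m) y) \<le> dist p w'"
          using pb[of "ns n" "xs n" w'] unfolding p_def by auto
        have ybb: "y \<in> bowen_ball f (ns n) (xs n) delta"
        proof -
          have "dist ((f^^m) (xs n)) ((f^^m) y) < delta" if "m < ns n" for m
            using y(2)[rule_format, of m] that \<open>dist p w' < delta\<close> by linarith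
          thus ?thesis unfolding bowen_ball_def by blast
        qed
        have orb: "(f^^(T' l + ns n + j)) y = (f^^T' l) y'" for l
        proof -
          have "T' l + ns n + j = T' l + (j + ns n)" by simp
          hence "(f^^(T' l + ns n + j)) y = (f^^T' l) ((f^^j) ((f^^ns n) y))"
            by (simp only: funpow_add o_apply)
          thus ?thesis using y(1) w'(1) by simp
        qed
        define T where "T l = (if l \<le> n then 0 else T' l + ns n + j)" for l
        show ?case
        proof (intro exI[of _ T] exI[of _ y] conjI allI impI)
          show "T n = 0" by (simp add: T_def)
        next
          fix l assume l: "n < l \<and> l < k"
          have c: "T (l - 1) + ns (l - 1) < T l \<and> T l - (T (l - 1) + ns (l - 1)) \<le> \<tau>"
          proof (cases "l = Suc n")
            case True
            then show ?thesis using IH(1) jw by (simp add: T_def)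
          next
            case False
            hence "Suc n < l" using l by simp
            hence "\<not> l - 1 \<le> n" "\<not> l \<le> n" by auto
            hence "T (l-1) = T' (l-1) + ns n + j" "T l = T' l + ns n + j" by (simp_all add: T_def)
            then show ?thesis using IH(2)[rule_format, of l] l \<open>Suc n < l\<close> by simp
          qed
          thus "T (l - 1) + ns (l - 1) < T l" "T l - (T (l - 1) + ns (l - 1)) \<le> \<tau>" by auto
        next
          fix l assume l: "n \<le> l \<and> l < k"
          show "(f ^^ T l) y \<in> bowen_ball f (ns l) (xs l) delta"
          proof (cases "l = n")
            case True
            then show ?thesis using ybb by (simp add: T_def)
          next
            case False
            hence "\<not> l \<le> n" "Suc n \<le> l" using l by auto
            then show ?thesis using IH(3) l orb by (simp add: T_def)
          qed
        qed
      qed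
      obtain T y where TY: "T 0 = 0"
          "\<forall>l. 0 < l \<and> l < k \<longrightarrow> T (l-1) + ns (l-1) < T l \<and> T l - (T (l-1) + ns (l-1)) \<le> \<tau>"
          "\<forall>l. 0 \<le> l \<and> l < k \<longrightarrow> (f^^T l) y \<in> bowen_ball f (ns l) (xs l) delta"
        using key[of 0] by auto
      show ?thesis
      proof (intro exI[of _ T] exI[of _ y] conjI allI impI)
        fix i assume "0 < i \<and> i < k"
        thus "T (i - 1) < T i" "T (i - 1) + ns (i - 1) \<le> T i" "T i - (T (i - 1) + ns (i - 1)) \<le> \<tau>"
          using TY(2) by force+
      next
        fix i assume "i < k"
        thus "(f ^^ T i) y \<in> bowen_ball f (ns i) (xs i) eps" using TY(3) bmono by blast
      qed (rule TY(1))
    qed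
  qed
qed

end
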